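(* Let $\mathcal{H}\in\mathbb{R}_D^{[n_1,\ldots,n_m]}$. Then $\mathcal{H}$ is $\mathbb{R}$-separable if and only if $\mathcal{H}$ is $\mathbb{C}$-separable.
   Context: For vectors $v_i$, $[v_1,\ldots,v_m]_{\otimes h}:=v_1\otimes\cdots\otimes v_m\otimes\overline{v_1}\otimes\cdots\otimes\overline{v_m}$. $\mathbb{R}_D^{[n_1,\ldots,n_m]}$ is the set of real tensors of the form $\sum_i\lambda_i[u_i^1,\ldots,u_i^m]_{\otimes h}$ with $\lambda_i\in\mathbb{R}$ and $u_i^j\in\mathbb{R}^{n_j}$. A Hermitian tensor $\mathcal{H}$ is $\mathbb{C}$-separable if $\mathcal{H}=\sum_{i=1}^r[u_i^1,\ldots,u_i^m]_{\otimes h}$ for some $u_i^j\in\mathbb{C}^{n_j}$, and $\mathbb{R}$-separable if this holds with all $u_i^j\in\mathbb{R}^{n_j}$. *)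

theory Defs
  imports Complex_Main
begin

text \<open>A tensor of order 2m with dimensions [n_1..n_m, n_1..n_m] is a function of two
index tuples i, j (each a map nat to nat); only valid index tuples (i k < n k for k < m)
are meaningful. Vector families are u :: nat => nat => 'a, with u k the k-th vector.\<close>

definition valid_idx :: "nat \<Rightarrow> (nat \<Rightarrow> nat) \<Rightarrow> (nat \<Rightarrow> nat) \<Rightarrow> bool" where
  "valid_idx m n i \<longleftrightarrow> (\<forall>k<m. i k < n k)"

text \<open>The entry (i,j) of [u_1,...,u_m]_{\<otimes>h} = u_1 \<otimes> ... \<otimes> u_m \<otimes> conj u_1 \<otimes> ... \<otimes> conj u_m.\<close>
definition herm_prod :: "nat \<Rightarrow> (nat \<Rightarrow> nat \<Rightarrow> complex) \<Rightarrow> (nat \<Rightarrow> nat) \<Rightarrow> (nat \<Rightarrow> nat) \<Rightarrow> complex" where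
  "herm_prod m u i j = (\<Prod>k<m. u k (i k) * cnj (u k (j k)))"

definition tensor_eq :: "nat \<Rightarrow> (nat \<Rightarrow> nat) \<Rightarrow> ((nat \<Rightarrow> nat) \<Rightarrow> (nat \<Rightarrow> nat) \<Rightarrow> complex)
    \<Rightarrow> ((nat \<Rightarrow> nat) \<Rightarrow> (nat \<Rightarrow> nat) \<Rightarrow> complex) \<Rightarrow> bool" where
  "tensor_eq m n A B \<longleftrightarrow> (\<forall>i j. valid_idx m n i \<longrightarrow> valid_idx m n j \<longrightarrow> A i j = B i j)"

definition in_RD :: "nat \<Rightarrow> (nat \<Rightarrow> nat) \<Rightarrow> ((nat \<Rightarrow> nat) \<Rightarrow> (nat \<Rightarrow> nat) \<Rightarrow> complex) \<Rightarrow> bool" where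
  "in_RD m n H \<longleftrightarrow> (\<exists>(r::nat) (lam::nat \<Rightarrow> real) (u::nat \<Rightarrow> nat \<Rightarrow> nat \<Rightarrow> real).
      tensor_eq m n H (\<lambda>i j. \<Sum>s<r. complex_of_real (lam s) *
          herm_prod m (\<lambda>k l. complex_of_real (u s k l)) i j))"

definition C_separable :: "nat \<Rightarrow> (nat \<Rightarrow> nat) \<Rightarrow> ((nat \<Rightarrow> nat) \<Rightarrow> (nat \<Rightarrow> nat) \<Rightarrow> complex) \<Rightarrow> bool" where
  "C_separable m n H \<longleftrightarrow> (\<exists>(r::nat) (u::nat \<Rightarrow> nat \<Rightarrow> nat \<Rightarrow> complex).
      tensor_eq m n H (\<lambda>i j. \<Sum>s<r. herm_prod m (u s) i j))"

definition R_separable :: "nat \<Rightarrow> (nat \<Rightarrow> nat) \<Rightarrow> ((nat \<Rightarrow> nat) \<Rightarrow> (nat \<Rightarrow> nat) \<Rightarrow> complex) \<Rightarrow> bool" where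
  "R_separable m n H \<longleftrightarrow> (\<exists>(r::nat) (u::nat \<Rightarrow> nat \<Rightarrow> nat \<Rightarrow> real).
      tensor_eq m n H (\<lambda>i j. \<Sum>s<r. herm_prod m (\<lambda>k l. complex_of_real (u s k l)) i j))"

end

theory Submission
  imports Defs
begin

definition RS :: "nat \<Rightarrow> ((nat \<Rightarrow> nat) \<Rightarrow> (nat \<Rightarrow> nat) \<Rightarrow> complex) \<Rightarrow> bool" where
  "RS m F \<longleftrightarrow> (\<exists>(r::nat) (u::nat \<Rightarrow> nat \<Rightarrow> nat \<Rightarrow> real).
      F = (\<lambda>i j. \<Sum>s<r. herm_prod m (\<lambda>k l. complex_of_real (u s k l)) i j))"

lemma RS_zero: "RS m (\<lambda>i j. 0)"
  unfolding RS_def by (rule exI[of _ 0]) auto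

lemma RS_single: "RS m (herm_prod m (\<lambda>k l. complex_of_real (v k l)))"
  unfolding RS_def by (rule exI[of _ 1], rule exI[of _ "\<lambda>_. v"]) auto

lemma RS_add:
  assumes "RS m F" "RS m G"
  shows "RS m (\<lambda>i j. F i j + G i j)"
proof -
  obtain r1 :: nat and u1 where 1: "F = (\<lambda>i j. \<Sum>s<r1. herm_prod m (\<lambda>k l. complex_of_real (u1 s k l)) i j)"
    using assms(1) unfolding RS_def by blast
  obtain r2 :: nat and u2 where 2: "G = (\<lambda>i j. \<Sum>s<r2. herm_prod m (\<lambda>k l. complex_of_real (u2 s k l)) i j)"
    using assms(2) unfolding RS_def by blast
  define u where "u = (\<lambda>s. if s < r1 then u1 s else u2 (s - r1))"
  have "(\<lambda>i j. F i j + G i j) = (\<lambda>i j. \<Sum>s<r1+r2. herm_prod m (\<lambda>k l. complex_of_real (u s k l)) i j)"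
  proof (intro ext)
    fix i j
    have "(\<Sum>s<r1+r2. herm_prod m (\<lambda>k l. complex_of_real (u s k l)) i j)
       = (\<Sum>s<r1. herm_prod m (\<lambda>k l. complex_of_real (u s k l)) i j)
         + (\<Sum>s<r2. herm_prod m (\<lambda>k l. complex_of_real (u (r1 + s) k l)) i j)"
      by (induct r2) (simp_all add: add.assoc)
    also have "\<dots> = F i j + G i j"
      unfolding 1 2 u_def by simp
    finally show "F i j + G i j = (\<Sum>s<r1+r2. herm_prod m (\<lambda>k l. complex_of_real (u s k l)) i j)"
      by simp
  qed
  then show ?thesis unfolding RS_def by blast
qed

lemma RS_sum:
  assumes "finite X" "\<And>x. x \<in> X \<Longrightarrow> RS m (F x)"
  shows "RS m (\<lambda>i j. \<Sum>x\<in>X. F x i j)"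
  using assms
proof (induction X rule: finite_induct)
  case empty
  then show ?case using RS_zero by simp
next
  case (insert a X)
  have "RS m (\<lambda>i j. F a i j + (\<Sum>x\<in>X. F x i j))"
    using RS_add[of m "F a" "\<lambda>i j. \<Sum>x\<in>X. F x i j"] insert by auto
  then show ?case using insert by simp
qed

lemma prod_if_split:
  fixes m :: nat
  assumes "X \<subseteq> {..<m}"
  shows "(\<Prod>k<m. if k \<in> X then f k else g k) = prod f X * prod g ({..<m} - X)"
proof -
  have "(\<Prod>k<m. if k \<in> X then f k else g k) = prod f ({..<m} \<inter> {k. k \<in> X}) * prod g ({..<m} \<inter> - {k. k \<in> X})"
    by (rule prod.If_cases) auto
  moreover have "{..<m} \<inter> {k. k \<in> X} = X" using assms by auto
  moreover have "{..<m} \<inter> - {k. k \<in> X} = {..<m} - X" by auto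
  ultimately show ?thesis by simp
qed

theorem lemma6p2:
  fixes m :: nat and n :: "nat \<Rightarrow> nat"
    and H :: "(nat \<Rightarrow> nat) \<Rightarrow> (nat \<Rightarrow> nat) \<Rightarrow> complex"
  assumes "in_RD m n H"
  shows "R_separable m n H \<longleftrightarrow> C_separable m n H"
proof
  assume "R_separable m n H"
  then obtain r :: nat and u where "tensor_eq m n H (\<lambda>i j. \<Sum>s<r. herm_prod m (\<lambda>k l. complex_of_real (u s k l)) i j)"
    unfolding R_separable_def by blast
  then show "C_separable m n H" unfolding C_separable_def
    by (intro exI[of _ r] exI[of _ "\<lambda>s k l. complex_of_real (u s k l)"])
next
  assume "C_separable m n H"
  then obtain r :: nat and w where Hw: "tensor_eq m n H (\<lambda>i j. \<Sum>s<r. herm_prod m (w s) i j)"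
    unfolding C_separable_def by blast
  obtain r0 :: nat and lam u0 where Hu: "tensor_eq m n H (\<lambda>i j. \<Sum>s<r0. complex_of_real (lam s) *
          herm_prod m (\<lambda>k l. complex_of_real (u0 s k l)) i j)"
    using assms unfolding in_RD_def by blast
  define sw where "sw = (\<lambda>(S::nat set) (i::nat\<Rightarrow>nat) (j::nat\<Rightarrow>nat) k. if k \<in> S then j k else i k)"
  define z where "z = (\<lambda>s k (i::nat\<Rightarrow>nat) (j::nat\<Rightarrow>nat). w s k (i k) * cnj (w s k (j k)))"
  define v where "v = (\<lambda>s T k l. if k \<in> T then Re (w s k l) else Im (w s k l))"
  have swv: "valid_idx m n (sw S i j)" if "valid_idx m n i" "valid_idx m n j" for S i j
    using that unfolding valid_idx_def sw_def by auto
  have key: "H i j = (\<Sum>s<r. \<Prod>k<m. complex_of_real (Re (z s k i j)))"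
    if vi: "valid_idx m n i" and vj: "valid_idx m n j" for i j
  proof -
    have a: "H (sw S i j) (sw S j i) = H i j" for S
    proof -
      have "H (sw S i j) (sw S j i) = (\<Sum>s<r0. complex_of_real (lam s) *
          herm_prod m (\<lambda>k l. complex_of_real (u0 s k l)) (sw S i j) (sw S j i))"
        using Hu swv[OF vi vj] swv[OF vj vi] unfolding tensor_eq_def by blast
      also have "\<dots> = (\<Sum>s<r0. complex_of_real (lam s) *
          herm_prod m (\<lambda>k l. complex_of_real (u0 s k l)) i j)"
        unfolding herm_prod_def sw_def
        apply (intro sum.cong refl)
        apply (rule arg_cong[where f="\<lambda>x. _ * x"])
        apply (rule prod.cong[OF refl])
        by (auto simp: mult.commute)
      also have "\<dots> = H i j" using Hu vi vj unfolding tensor_eq_def by metis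
      finally show ?thesis .
    qed
    have b: "H (sw S i j) (sw S j i) = (\<Sum>s<r. \<Prod>k<m. if k \<in> S then cnj (z s k i j) else z s k i j)" for S
    proof -
      have "H (sw S i j) (sw S j i) = (\<Sum>s<r. herm_prod m (w s) (sw S i j) (sw S j i))"
        using Hw swv[OF vi vj] swv[OF vj vi] unfolding tensor_eq_def by blast
      also have "\<dots> = (\<Sum>s<r. \<Prod>k<m. if k \<in> S then cnj (z s k i j) else z s k i j)"
        unfolding herm_prod_def sw_def z_def
        by (intro sum.cong refl prod.cong) (auto simp: mult.commute)
      finally show ?thesis .
    qed
    have "of_nat (2^m) * H i j = (\<Sum>S\<in>Pow {..<m}. H (sw S i j) (sw S j i))"
      using a by (simp add: card_Pow)
    also have "\<dots> = (\<Sum>S\<in>Pow {..<m}. \<Sum>s<r. \<Prod>k<m. if k \<in> S then cnj (z s k i j) else z s k i j)"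
      using b by simp
    also have "\<dots> = (\<Sum>s<r. \<Sum>S\<in>Pow {..<m}. \<Prod>k<m. if k \<in> S then cnj (z s k i j) else z s k i j)"
      by (rule sum.swap)
    also have "\<dots> = (\<Sum>s<r. \<Sum>S\<in>Pow {..<m}. prod (\<lambda>k. cnj (z s k i j)) S * prod (\<lambda>k. z s k i j) ({..<m} - S))"
      by (intro sum.cong refl prod_if_split) auto
    also have "\<dots> = (\<Sum>s<r. \<Prod>k<m. cnj (z s k i j) + z s k i j)"
      by (intro sum.cong refl prod_add[symmetric]) auto
    also have "\<dots> = (\<Sum>s<r. \<Prod>k<m. 2 * complex_of_real (Re (z s k i j)))"
      by (intro sum.cong refl prod.cong) (simp_all add: add.commute[of "cnj _"] complex_add_cnj)
    also have "\<dots> = of_nat (2^m) * (\<Sum>s<r. \<Prod>k<m. complex_of_real (Re (z s k i j)))"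
      by (simp add: prod.distrib sum_distrib_left)
    finally show ?thesis by simp
  qed
  have key2: "(\<Prod>k<m. complex_of_real (Re (z s k i j)))
      = (\<Sum>T\<in>Pow {..<m}. herm_prod m (\<lambda>k l. complex_of_real (v s T k l)) i j)" for s i j
  proof -
    have "(\<Prod>k<m. complex_of_real (Re (z s k i j)))
      = (\<Prod>k<m. complex_of_real (Re (w s k (i k)) * Re (w s k (j k)))
               + complex_of_real (Im (w s k (i k)) * Im (w s k (j k))))"
      unfolding z_def by (intro prod.cong refl) simp
    also have "\<dots> = (\<Sum>T\<in>Pow {..<m}. (\<Prod>k\<in>T. complex_of_real (Re (w s k (i k)) * Re (w s k (j k))))
               * (\<Prod>k\<in>{..<m}-T. complex_of_real (Im (w s k (i k)) * Im (w s k (j k)))))"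
      by (rule prod_add) simp
    also have "\<dots> = (\<Sum>T\<in>Pow {..<m}. herm_prod m (\<lambda>k l. complex_of_real (v s T k l)) i j)"
    proof (intro sum.cong refl)
      fix T assume T: "T \<in> Pow {..<m}"
      have "herm_prod m (\<lambda>k l. complex_of_real (v s T k l)) i j
         = (\<Prod>k<m. if k \<in> T then complex_of_real (Re (w s k (i k)) * Re (w s k (j k)))
               else complex_of_real (Im (w s k (i k)) * Im (w s k (j k))))"
        unfolding herm_prod_def v_def by (intro prod.cong refl) auto
      also have "\<dots> = (\<Prod>k\<in>T. complex_of_real (Re (w s k (i k)) * Re (w s k (j k))))
               * (\<Prod>k\<in>{..<m}-T. complex_of_real (Im (w s k (i k)) * Im (w s k (j k))))"
        using T by (intro prod_if_split) auto
      finally show "(\<Prod>k\<in>T. complex_of_real (Re (w s k (i k)) * Re (w s k (j k))))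
               * (\<Prod>k\<in>{..<m}-T. complex_of_real (Im (w s k (i k)) * Im (w s k (j k))))
          = herm_prod m (\<lambda>k l. complex_of_real (v s T k l)) i j" by simp
    qed
    finally show ?thesis .
  qed
  have "RS m (\<lambda>i j. \<Sum>s<r. \<Sum>T\<in>Pow {..<m}. herm_prod m (\<lambda>k l. complex_of_real (v s T k l)) i j)"
    by (intro RS_sum RS_single) auto
  then obtain r' :: nat and u' where G: "(\<lambda>i j. \<Sum>s<r. \<Sum>T\<in>Pow {..<m}. herm_prod m (\<lambda>k l. complex_of_real (v s T k l)) i j)
     = (\<lambda>i j. \<Sum>s<r'. herm_prod m (\<lambda>k l. complex_of_real (u' s k l)) i j)"
    unfolding RS_def by blast
  have "tensor_eq m n H (\<lambda>i j. \<Sum>s<r'. herm_prod m (\<lambda>k l. complex_of_real (u' s k l)) i j)"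
    unfolding tensor_eq_def
  proof (intro allI impI)
    fix i j assume vi: "valid_idx m n i" and vj: "valid_idx m n j"
    have "H i j = (\<Sum>s<r. \<Sum>T\<in>Pow {..<m}. herm_prod m (\<lambda>k l. complex_of_real (v s T k l)) i j)"
      using key[OF vi vj] key2 by simp
    also have "\<dots> = (\<Sum>s<r'. herm_prod m (\<lambda>k l. complex_of_real (u' s k l)) i j)"
      using fun_cong[OF fun_cong[OF G, of i], of j] by simp
    finally show "H i j = (\<Sum>s<r'. herm_prod m (\<lambda>k l. complex_of_real (u' s k l)) i j)" .
  qed
  then show "R_separable m n H" unfolding R_separable_def by blast
qed

end
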